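(* Let $a\geq b\geq c\geq d>0$. If $ad-bc>0$, then $$\frac{H(a,b)}{H(c,d)}<\frac{G(a,b)}{G(c,d)}<\frac{L(a,b)}{L(c,d)}<\frac{I(a,b)}{I(c,d)}<\frac{A(a,b)}{A(c,d)}.$$ If $ad-bc<0$, all these inequalities are reversed (strictly), and if $ad-bc=0$, all of them become equalities.
   Context: For $u,v>0$: $A(u,v)=\frac{u+v}{2}$, $G(u,v)=\sqrt{uv}$, $H(u,v)=\frac{2}{1/u+1/v}$; the logarithmic mean is $L(u,v)=\frac{u-v}{\ln u-\ln v}$ if $u\neq v$ and $L(u,u)=u$; the identric mean is $I(u,v)=\frac{1}{e}\left(\frac{u^u}{v^v}\right)^{1/(u-v)}$ if $u\neq v$ and $I(u,u)=u$. *)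

theory Defs
  imports Complex_Main
begin

definition AM :: "real \<Rightarrow> real \<Rightarrow> real" where
  "AM u v = (u + v) / 2"

definition GM :: "real \<Rightarrow> real \<Rightarrow> real" where
  "GM u v = sqrt (u * v)"

definition HM :: "real \<Rightarrow> real \<Rightarrow> real" where
  "HM u v = 2 / (1 / u + 1 / v)"

definition LM :: "real \<Rightarrow> real \<Rightarrow> real" where
  "LM u v = (if u = v then u else (u - v) / (ln u - ln v))"

definition IM :: "real \<Rightarrow> real \<Rightarrow> real" where
  "IM u v = (if u = v then u
             else (1 / exp 1) * ((u powr u / v powr v) powr (1 / (u - v))))"

end

theory Submission imports Defs "HOL-Real_Asymp.Real_Asymp" begin
lemma e2: "exp (2*s) = exp s ^ 2" for s::real
  by (metis exp_double power2_eq_square exp_add mult_2)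

lemma ch: "cosh s = (exp s ^ 2 + 1) / (2 * exp s)" for s :: real
  by (simp add: cosh_field_def exp_minus field_simps power2_eq_square)
lemma sh: "sinh s = (exp s ^ 2 - 1) / (2 * exp s)" for s :: real
  by (simp add: sinh_field_def exp_minus field_simps power2_eq_square)

lemma repH: assumes "b > 0" shows "HM (b * exp (2*s)) b = b * exp s * (1 / cosh s)"
  using assms unfolding HM_def ch e2 by (simp add: field_simps power2_eq_square)
lemma repG: assumes "b > 0" shows "GM (b * exp (2*s)) b = b * exp s * 1"
proof -
  have "b * exp (2*s) * b = (b * exp s)^2" by (simp add: e2 power2_eq_square)
  then show ?thesis using assms unfolding GM_def by simp
qed
lemma repA: assumes "b > 0" shows "AM (b * exp (2*s)) b = b * exp s * cosh s"
  using assms unfolding AM_def ch e2 by (simp add: field_simps)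
lemma repL: assumes "b > 0" "s \<ge> 0"
  shows "LM (b * exp (2*s)) b = b * exp s * (if s = 0 then 1 else sinh s / s)"
proof (cases "s = 0")
  case False
  then have s: "s > 0" using assms by simp
  have ne: "b * exp (2*s) \<noteq> b" using s assms by simp
  have "ln (b * exp (2*s)) - ln b = 2 * s" using assms by (simp add: ln_mult)
  then show ?thesis using ne s assms unfolding LM_def sh e2 by (simp add: field_simps)
qed (simp add: LM_def)

lemma repI: assumes "b > 0" "s \<ge> 0"
  shows "IM (b * exp (2*s)) b = b * exp s * (if s = 0 then 1 else exp (s * cosh s / sinh s - 1))"
proof (cases "s = 0")
  case False
  then have s: "s > 0" using assms by simp
  define u where "u = b * exp (2*s)"
  have u: "u > b" using s assms unfolding u_def by simp
  have up: "u > 0" using u assms by simp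
  have ne: "u \<noteq> b" using u by simp
  have lnu: "ln u = ln b + 2 * s" using assms unfolding u_def by (simp add: ln_mult)
  have pos: "u powr u / b powr b > 0" using up assms by simp
  have "ln (u powr u / b powr b) = u * ln u - b * ln b"
    using up assms by (simp add: ln_div ln_powr)
  also have "\<dots> = (u - b) * ln b + 2 * s * u" unfolding lnu by (simp add: algebra_simps)
  finally have L: "ln (u powr u / b powr b) = (u - b) * ln b + 2 * s * u" .
  have "(u powr u / b powr b) powr (1 / (u - b)) = exp (1 / (u - b) * ln (u powr u / b powr b))"
    using pos up assms by (simp add: powr_def)
  also have "\<dots> = exp (ln b + 2 * s * u / (u - b))" unfolding L using u by (simp add: field_simps)
  also have "\<dots> = b * exp (2 * s * u / (u - b))" using assms by (simp add: exp_add)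
  finally have P: "(u powr u / b powr b) powr (1 / (u - b)) = b * exp (2 * s * u / (u - b))" .
  have E: "2 * s * u / (u - b) = s + (s * cosh s / sinh s - 1) + 1"
  proof -
    have ep: "exp s > 0" "exp s ^ 2 > 1" using s by auto
    show ?thesis unfolding u_def e2 ch sh using ep assms by (simp add: field_simps)
  qed
  have "IM u b = (1 / exp 1) * (b * exp (s + (s * cosh s / sinh s - 1) + 1))"
    unfolding IM_def using ne P E by simp
  also have "\<dots> = b * exp s * exp (s * cosh s / sinh s - 1)" by (simp add: exp_add exp_diff)
  finally show ?thesis using False unfolding u_def by simp
qed (simp add: IM_def)
lemma mono_phi:
  fixes \<phi> \<phi>' :: "real \<Rightarrow> real"
  assumes der: "\<And>s. s > 0 \<Longrightarrow> (\<phi> has_real_derivative \<phi>' s) (at s)"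
    and pos: "\<And>s. s > 0 \<Longrightarrow> \<phi>' s > 0"
    and lim: "(\<phi> \<longlongrightarrow> 0) (at_right 0)"
    and y: "0 \<le> y" and xy: "y < x"
  shows "(if y = 0 then 1 else exp (\<phi> y)) < exp (\<phi> x)"
proof -
  have inc: "\<phi> p < \<phi> q" if "0 < p" "p < q" for p q
    apply (rule DERIV_pos_imp_increasing[OF \<open>p<q\<close>])
    subgoal for t using der[of t] pos[of t] that by auto
    done
  show ?thesis
  proof (cases "y = 0")
    case False
    then show ?thesis using inc[of y x] y xy by simp
  next
    case True
    then have x: "x > 0" using xy by simp
    have "eventually (\<lambda>t. \<phi> t \<le> \<phi> (x/2)) (at_right 0)"
      unfolding eventually_at_right_field using x
      by (intro exI[of _ "x/2"]) (auto intro!: less_imp_le inc)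
    then have "0 \<le> \<phi> (x/2)"
      by (rule tendsto_upperbound[OF lim]) simp
    also have "\<phi> (x/2) < \<phi> x" using inc[of "x/2" x] x by simp
    finally show ?thesis using True by simp
  qed
qed

lemma sinh_gt: fixes s::real assumes "s > 0" shows "s < sinh s"
proof -
  have "(\<lambda>t. sinh t - t) 0 < (\<lambda>t. sinh t - t) s"
  proof (rule DERIV_pos_imp_increasing_open[OF assms])
    fix x :: real assume "0 < x" "x < s"
    then have "cosh x > 1" using cosh_real_ge_1[of x] cosh_real_one_iff[of x] by linarith
    then show "\<exists>y. ((\<lambda>t. sinh t - t) has_real_derivative y) (at x) \<and> 0 < y"
      by (intro exI[of _ "cosh x - 1"]) (auto intro!: derivative_eq_intros)
  qed (intro continuous_intros)
  then show ?thesis by simp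
qed

lemma scosh_gt: fixes s::real assumes "s > 0" shows "sinh s < s * cosh s"
proof -
  have "(\<lambda>t. t * cosh t - sinh t) 0 < (\<lambda>t. t * cosh t - sinh t) s"
  proof (rule DERIV_pos_imp_increasing_open[OF assms])
    fix x :: real assume "0 < x" "x < s"
    then have "x * sinh x > 0" by simp
    then show "\<exists>y. ((\<lambda>t. t * cosh t - sinh t) has_real_derivative y) (at x) \<and> 0 < y"
      by (intro exI[of _ "x * sinh x"]) (auto intro!: derivative_eq_intros simp: algebra_simps)
  qed (intro continuous_intros)
  then show ?thesis by simp
qed

lemma der2: "s > 0 \<Longrightarrow> ((\<lambda>s. ln (sinh s) - ln s) has_real_derivative (cosh s / sinh s - 1 / s)) (at s)"
  by (auto intro!: derivative_eq_intros)
lemma pos2: "s > 0 \<Longrightarrow> cosh s / sinh s - 1 / (s::real) > 0"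
  using scosh_gt[of s] by (simp add: field_simps)

lemma der3: "s > 0 \<Longrightarrow> ((\<lambda>s. s * cosh s / sinh s - 1 + ln s - ln (sinh s)) has_real_derivative (1 / s - s / sinh s ^ 2)) (at s)"
  apply (rule derivative_eq_intros refl | simp)+
  apply (simp add: field_simps power2_eq_square)
  using cosh_square_eq[of s] by algebra
lemma pos3: "s > 0 \<Longrightarrow> 1 / s - s / sinh s ^ 2 > (0::real)"
proof -
  assume s: "s > 0"
  then have "s < sinh s" by (rule sinh_gt)
  then have "s * s < sinh s ^ 2" using s by (simp add: power2_eq_square mult_strict_mono)
  then show ?thesis using s by (simp add: field_simps)
qed

lemma der4: "s > 0 \<Longrightarrow> ((\<lambda>s. ln (cosh s) + 1 - s * cosh s / sinh s) has_real_derivative (sinh s / cosh s - (cosh s * sinh s - s) / sinh s ^ 2)) (at s)"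
  apply (rule derivative_eq_intros refl | simp)+
  apply (simp add: field_simps power2_eq_square)
  using cosh_square_eq[of s] by algebra
lemma pos4: "s > 0 \<Longrightarrow> sinh s / cosh s - (cosh s * sinh s - s) / sinh s ^ 2 > (0::real)"
proof -
  assume s: "s > 0"
  then have a: "sinh s < s * cosh s" by (rule scosh_gt)
  have sp: "sinh s > 0" using s by simp
  have "sinh s / cosh s - (cosh s * sinh s - s) / sinh s ^ 2 = (s * cosh s - sinh s) / (sinh s ^ 2 * cosh s)"
    using sp by (simp add: field_simps power2_eq_square) (use cosh_square_eq[of s] in algebra)
  then show ?thesis using a sp by simp
qed
lemma lim2: "((\<lambda>s::real. ln (sinh s) - ln s) \<longlongrightarrow> 0) (at_right 0)" by real_asymp
lemma lim3: "((\<lambda>s::real. s * cosh s / sinh s - 1 + ln s - ln (sinh s)) \<longlongrightarrow> 0) (at_right 0)" by real_asymp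
lemma lim4: "((\<lambda>s::real. ln (cosh s) + 1 - s * cosh s / sinh s) \<longlongrightarrow> 0) (at_right 0)" by real_asymp

lemma tri:
  fixes R1 R2 :: "real \<Rightarrow> real"
  assumes pos1: "\<And>s. s \<ge> 0 \<Longrightarrow> R1 s > 0" and pos2: "\<And>s. s \<ge> 0 \<Longrightarrow> R2 s > 0"
    and mono: "\<And>y x. 0 \<le> y \<Longrightarrow> y < x \<Longrightarrow> R2 y / R1 y < R2 x / R1 x"
    and x: "x \<ge> 0" and y: "y \<ge> 0" and B: "B > 0" and D: "D > 0"
  shows "(x > y \<longrightarrow> (B * R1 x) / (D * R1 y) < (B * R2 x) / (D * R2 y)) \<and>
         (x < y \<longrightarrow> (B * R1 x) / (D * R1 y) > (B * R2 x) / (D * R2 y)) \<and>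
         (x = y \<longrightarrow> (B * R1 x) / (D * R1 y) = (B * R2 x) / (D * R2 y))"
proof -
  have p: "R1 x > 0" "R1 y > 0" "R2 x > 0" "R2 y > 0" using pos1 pos2 x y by auto
  have eq: "(B * R1 x) / (D * R1 y) < (B * R2 x) / (D * R2 y) \<longleftrightarrow> R2 y / R1 y < R2 x / R1 x"
    using p B D by (simp add: field_simps)
  have eq2: "(B * R1 x) / (D * R1 y) > (B * R2 x) / (D * R2 y) \<longleftrightarrow> R2 y / R1 y > R2 x / R1 x"
    using p B D by (simp add: field_simps)
  show ?thesis using eq eq2 mono[of y x] mono[of x y] x y by auto
qed

definition RH :: "real \<Rightarrow> real" where "RH s = 1 / cosh s"
definition RG :: "real \<Rightarrow> real" where "RG s = 1"
definition RL :: "real \<Rightarrow> real" where "RL s = (if s = 0 then 1 else sinh s / s)"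
definition RI :: "real \<Rightarrow> real" where "RI s = (if s = 0 then 1 else exp (s * cosh s / sinh s - 1))"
definition RA :: "real \<Rightarrow> real" where "RA s = cosh s"

lemma Rpos: "s \<ge> 0 \<Longrightarrow> RH s > 0 \<and> RG s > 0 \<and> RL s > 0 \<and> RI s > 0 \<and> RA s > 0"
  unfolding RH_def RG_def RL_def RI_def RA_def by auto

lemma m1: "0 \<le> y \<Longrightarrow> y < x \<Longrightarrow> RG y / RH y < RG x / RH x"
  unfolding RG_def RH_def by (simp add: cosh_real_nonneg_less_iff)

lemma m2: assumes "0 \<le> y" "y < x" shows "RL y / RG y < RL x / RG x"
proof -
  have "(if y = 0 then 1 else exp (ln (sinh y) - ln y)) < exp (ln (sinh x) - ln x)"
    by (rule mono_phi[OF der2 pos2 lim2 assms])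
  moreover have "(s::real) > 0 \<Longrightarrow> exp (ln (sinh s) - ln s) = sinh s / s" for s
    by (simp only: exp_diff) simp
  ultimately show ?thesis using assms unfolding RL_def RG_def by (auto split: if_splits)
qed

lemma m3: assumes "0 \<le> y" "y < x" shows "RI y / RL y < RI x / RL x"
proof -
  have "(if y = 0 then 1 else exp (y * cosh y / sinh y - 1 + ln y - ln (sinh y)))
        < exp (x * cosh x / sinh x - 1 + ln x - ln (sinh x))"
    by (rule mono_phi[OF der3 pos3 lim3 assms])
  moreover have "(s::real) > 0 \<Longrightarrow> exp (s * cosh s / sinh s - 1 + ln s - ln (sinh s))
      = exp (s * cosh s / sinh s - 1) / (sinh s / s)" for s
    by (simp only: exp_diff exp_add) simp
  ultimately show ?thesis using assms unfolding RL_def RI_def by (auto split: if_splits)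
qed

lemma m4: assumes "0 \<le> y" "y < x" shows "RA y / RI y < RA x / RI x"
proof -
  have "(if y = 0 then 1 else exp (ln (cosh y) + 1 - y * cosh y / sinh y))
        < exp (ln (cosh x) + 1 - x * cosh x / sinh x)"
    by (rule mono_phi[OF der4 pos4 lim4 assms])
  moreover have "(s::real) > 0 \<Longrightarrow> exp (ln (cosh s) + 1 - s * cosh s / sinh s)
      = cosh s / exp (s * cosh s / sinh s - 1)" for s
    by (simp only: exp_diff exp_add) (simp add: field_simps)
  ultimately show ?thesis using assms unfolding RA_def RI_def by (auto split: if_splits)
qed

theorem theorem3p4:
  fixes a b c d :: real
  assumes "a \<ge> b" and "b \<ge> c" and "c \<ge> d" and "d > 0"
  shows "(a * d - b * c > 0 \<longrightarrow>
            HM a b / HM c d < GM a b / GM c d \<and>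
            GM a b / GM c d < LM a b / LM c d \<and>
            LM a b / LM c d < IM a b / IM c d \<and>
            IM a b / IM c d < AM a b / AM c d)
       \<and> (a * d - b * c < 0 \<longrightarrow>
            HM a b / HM c d > GM a b / GM c d \<and>
            GM a b / GM c d > LM a b / LM c d \<and>
            LM a b / LM c d > IM a b / IM c d \<and>
            IM a b / IM c d > AM a b / AM c d)
       \<and> (a * d - b * c = 0 \<longrightarrow>
            HM a b / HM c d = GM a b / GM c d \<and>
            GM a b / GM c d = LM a b / LM c d \<and>
            LM a b / LM c d = IM a b / IM c d \<and>
            IM a b / IM c d = AM a b / AM c d)"
proof -
  have b: "b > 0" and c: "c > 0" using assms by auto
  define x where "x = ln (a / b) / 2"
  define y where "y = ln (c / d) / 2"
  have ax: "a = b * exp (2 * x)" using b assms unfolding x_def by simp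
  have cy: "c = d * exp (2 * y)" using c assms unfolding y_def by simp
  have x0: "x \<ge> 0" using b assms unfolding x_def by simp
  have y0: "y \<ge> 0" using c assms unfolding y_def by simp
  have sgn: "a * d - b * c = b * d * (exp (2 * x) - exp (2 * y))"
    unfolding ax cy by (simp add: algebra_simps)
  have bd: "b * d > 0" using b assms by simp
  have s1: "a * d - b * c > 0 \<longleftrightarrow> x > y" unfolding sgn using b assms(4)
    by (simp add: zero_less_mult_iff mult_less_0_iff)
  have s2: "a * d - b * c < 0 \<longleftrightarrow> x < y" unfolding sgn using b assms(4)
    by (simp add: zero_less_mult_iff mult_less_0_iff)
  have s3: "a * d - b * c = 0 \<longleftrightarrow> x = y" unfolding sgn using b assms(4) by simp
  define B where "B = b * exp x"
  define D where "D = d * exp y"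
  have B: "B > 0" and D: "D > 0" using b assms unfolding B_def D_def by auto
  have H: "HM a b = B * RH x" "HM c d = D * RH y"
    unfolding ax cy B_def D_def RH_def using repH b assms by auto
  have G: "GM a b = B * RG x" "GM c d = D * RG y"
    unfolding ax cy B_def D_def RG_def using repG b assms by auto
  have L: "LM a b = B * RL x" "LM c d = D * RL y"
    unfolding ax cy B_def D_def RL_def using repL b assms x0 y0 by auto
  have I: "IM a b = B * RI x" "IM c d = D * RI y"
    unfolding ax cy B_def D_def RI_def using repI b assms x0 y0 by auto
  have A: "AM a b = B * RA x" "AM c d = D * RA y"
    unfolding ax cy B_def D_def RA_def using repA b assms by auto
  note t1 = tri[of RH RG, OF _ _ m1 x0 y0 B D]
  note t2 = tri[of RG RL, OF _ _ m2 x0 y0 B D]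
  note t3 = tri[of RL RI, OF _ _ m3 x0 y0 B D]
  note t4 = tri[of RI RA, OF _ _ m4 x0 y0 B D]
  show ?thesis unfolding s1 s2 s3 H G L I A using t1 t2 t3 t4 Rpos by auto
qed

end
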